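(* Let $m\ge5$ with $m\equiv1\pmod4$, let $N=3^m-1$ and $v=\frac{3^m-1}{2}-3^{(m-1)/2}-1$. Then $\gcd(v,N)=1$, and for every integer $i$ with $0\le i\le\frac{3^{(m-1)/2}-1}{4}$, the $3$-weight of $v(1+2i)\bmod N$ is congruent to $3$ modulo $4$ (i.e. the $3$-adic digit vector of $v(1+2i)\bmod N$ lies in $S_3(m)$).
   Context: For an integer $i$, $i\bmod N$ is the unique $s\in\{0,\dots,N-1\}$ with $N\mid i-s$. For $0\le s\le 3^m-1$ with $3$-adic expansion $s=\sum_{j=0}^{m-1}s_j3^j$, $s_j\in\{0,1,2\}$, the $3$-weight is $\mathrm{wt}_3(s)=\sum_j s_j$. $S_j(m)=\{(i_0,\dots,i_{m-1})\in\{0,1,2\}^m:\sum i_k\equiv j\pmod 4\}$. *)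

theory Defs
  imports Main
begin

definition digit3 :: "nat \<Rightarrow> nat \<Rightarrow> nat" where
  "digit3 s j = s div 3 ^ j mod 3"

definition wt3 :: "nat \<Rightarrow> nat \<Rightarrow> nat" where
  "wt3 m s = (\<Sum>j<m. digit3 s j)"

end

theory Submission
  imports Defs
begin

lemma wt3_0[simp]: "wt3 0 s = 0" by (simp add: wt3_def)

lemma wt3_Suc: "wt3 (Suc n) s = s mod 3 + wt3 n (s div 3)"
proof -
  have "wt3 (Suc n) s = digit3 s 0 + (\<Sum>j<n. digit3 s (Suc j))"
    unfolding wt3_def by (rule sum.lessThan_Suc_shift)
  moreover have "\<And>j. digit3 s (Suc j) = digit3 (s div 3) j"
    by (simp add: digit3_def div_mult2_eq)
  ultimately show ?thesis by (simp add: wt3_def digit3_def)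
qed

lemma A: "(q * 3 ^ Suc k + r) mod 3 = (r::nat) mod 3"
    by (simp add: mult.commute[of 3] mult.assoc[symmetric])
lemma B: "(q * 3 ^ Suc k + r) div 3 = q * 3 ^ k + (r::nat) div 3"
    by (simp add: mult.commute[of 3] mult.assoc[symmetric])
lemma C: "(r::nat) < 3 ^ Suc k \<Longrightarrow> r div 3 < 3 ^ k"
  by (simp add: less_mult_imp_div_less mult.commute)

lemma wt3_split: "r < 3 ^ k \<Longrightarrow> wt3 (k + n) (q * 3 ^ k + r) = wt3 k r + wt3 n q"
proof (induction k arbitrary: r)
  case 0 then show ?case by simp
next
  case (Suc k)
  have "r div 3 < 3 ^ k" using Suc.prems by (rule C)
  then have "wt3 (k + n) (q * 3 ^ k + r div 3) = wt3 k (r div 3) + wt3 n q" by (rule Suc.IH)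
  then show ?case by (simp only: add_Suc wt3_Suc A B)
qed

lemma wt3_parity: "s < 3 ^ n \<Longrightarrow> wt3 n s mod 2 = s mod 2"
proof (induction n arbitrary: s)
  case 0 then show ?case by simp
next
  case (Suc n)
  have "s div 3 < 3 ^ n" using Suc.prems by (rule C)
  from Suc.IH[OF this] have h: "wt3 n (s div 3) mod 2 = (s div 3) mod 2" .
  have "s = 2 * (s div 3) + (s div 3 + s mod 3)" by simp
  then have "s mod 2 = (2 * (s div 3) + (s div 3 + s mod 3)) mod 2" by (rule arg_cong[where f="\<lambda>x. x mod 2"])
  also have "\<dots> = (s div 3 + s mod 3) mod 2" by (rule mod_mult_self4)
  finally have "s mod 2 = (s div 3 + s mod 3) mod 2" .
  have "wt3 (Suc n) s mod 2 = (s mod 3 + wt3 n (s div 3) mod 2) mod 2"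
    by (simp only: wt3_Suc mod_add_right_eq)
  also have "\<dots> = (s mod 3 + (s div 3) mod 2) mod 2" by (simp only: h)
  also have "\<dots> = (s mod 3 + s div 3) mod 2" by (rule mod_add_right_eq)
  also have "\<dots> = (s div 3 + s mod 3) mod 2" by (simp only: add.commute)
  finally show ?case using \<open>s mod 2 = (s div 3 + s mod 3) mod 2\<close> by simp
qed

lemma wt3_all2: "wt3 k (3 ^ k - 1) = 2 * k"
proof (induction k)
  case 0 then show ?case by simp
next
  case (Suc k)
  have p: "(3::nat) ^ k \<ge> 1" by simp
  obtain x where x: "(3::nat) ^ k = Suc x" using p by (cases "(3::nat)^k") auto
  have e: "(3::nat) ^ Suc k - 1 = 3 * x + 2" by (simp add: x)
  have m3: "(3 * x + 2) mod 3 = (2::nat)" "(3 * x + 2) div 3 = x" by presburger+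
  have "wt3 (Suc k) (3 * x + 2) = 2 + wt3 k x" by (simp only: wt3_Suc m3)
  moreover have "x = 3 ^ k - 1" by (simp add: x)
  ultimately show ?case using Suc.IH e by simp
qed

lemma wt3_m2: "k \<ge> 1 \<Longrightarrow> wt3 k (3 ^ k - 2) = 2 * k - 1"
proof -
  assume "k \<ge> 1"
  then obtain k' where k: "k = Suc k'" by (cases k) auto
  have p: "(3::nat) ^ k' \<ge> 1" by simp
  obtain x where x: "(3::nat) ^ k' = Suc x" using p by (cases "(3::nat)^k'") auto
  have e: "(3::nat) ^ Suc k' - 2 = 3 * x + 1" by (simp add: x)
  have m3: "(3 * x + 1) mod 3 = (1::nat)" "(3 * x + 1) div 3 = x" by presburger+
  have "wt3 (Suc k') (3 * x + 1) = 1 + wt3 k' x" by (simp only: wt3_Suc m3)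
  moreover have "x = 3 ^ k' - 1" by (simp add: x)
  ultimately show ?thesis using wt3_all2[of k'] k e by simp
qed

lemma gcd_part:
  fixes b :: nat
  shows "gcd (24*b*b + 56*b + 31) (48*b*b + 120*b + 74) = 1"
proof -
  define v where "v = 24*b*b + 56*b + 31"
  define N where "N = (48*b*b + 120*b + 74::nat)"
  define d where "d = gcd v N"
  have id: "(12*b+10)*N + 4 = (24*b+24)*v" unfolding v_def N_def by (simp add: algebra_simps)
  have d1: "d dvd (12*b+10)*N" unfolding d_def by simp
  have d2: "d dvd (24*b+24)*v" unfolding d_def by simp
  have "d dvd (12*b+10)*N + 4" using d2 id by simp
  then have d4: "d dvd 4" using d1 by (simp add: dvd_add_right_iff)
  have "odd v" unfolding v_def by simp
  then have od: "odd d" unfolding d_def by (meson dvd_trans gcd_dvd1)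
  have "d \<le> 4" using d4 by (simp add: dvd_imp_le)
  then have "d = 0 \<or> d = 1 \<or> d = 2 \<or> d = 3 \<or> d = 4" by arith
  then have "d = 1" using d4 od by auto
  then show ?thesis unfolding d_def v_def N_def .
qed

lemma main_gen:
  fixes b i c k :: nat
  assumes h: "3 ^ k = 4*b+5" and bic: "b = i + c"
  defines "v \<equiv> 24*b*b + 56*b + 31" and "N \<equiv> 48*b*b + 120*b + 74"
  shows "wt3 (k + Suc k) ((v * (1 + 2 * i)) mod N) mod 4 = 3"
proof -
  define r where "r = 2*c+1"
  define q where "q = 3^k + r"
  have id: "v * (1 + 2 * i) = (q * 3^k + r) + i * N"
    unfolding q_def r_def h v_def N_def bic by (simp add: algebra_simps)
  have qle: "q \<le> 6*b+6" unfolding q_def r_def h using bic by simp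
  have "q * 3^k \<le> (6*b+6)*(4*b+5)" unfolding h using qle by (rule mult_le_mono1)
  also have "\<dots> = 24*b*b + 54*b + 30" by (simp add: algebra_simps)
  finally have qh: "q * 3^k \<le> 24*b*b + 54*b + 30" .
  have "r \<le> 2*b+1" unfolding r_def using bic by simp
  then have lt: "q * 3^k + r < N" unfolding N_def using qh by linarith
  have "(v * (1 + 2 * i)) mod N = (q * 3^k + r) mod N" unfolding id by (rule mod_mult_self1)
  then have x: "(v * (1 + 2 * i)) mod N = q * 3^k + r" using lt by simp
  have rl: "r < 3^k" unfolding h r_def using bic by simp
  have w: "wt3 (k + Suc k) (q * 3^k + r) = wt3 k r + wt3 (Suc k) q"
    by (rule wt3_split[OF rl])
  have "wt3 (k + 1) (1 * 3^k + r) = wt3 k r + wt3 1 1" using wt3_split[OF rl] by blast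
  then have wq: "wt3 (Suc k) q = wt3 k r + 1" unfolding q_def by (simp add: wt3_Suc)
  have "wt3 k r mod 2 = 1" using wt3_parity[OF rl] unfolding r_def by simp
  then obtain j where "wt3 k r = 2*j+1" by (metis odd_two_times_div_two_succ odd_iff_mod_2_eq_one)
  then have "wt3 k r + wt3 (Suc k) q = 4*j + 3" unfolding wq by simp
  then show ?thesis unfolding x w by simp
qed

lemma main_edge:
  fixes b k :: nat
  assumes h: "3 ^ k = 4*b+5" and ke: "even k"
  defines "v \<equiv> 24*b*b + 56*b + 31" and "N \<equiv> 48*b*b + 120*b + 74"
  shows "wt3 (k + Suc k) ((v * (1 + 2 * (b+1))) mod N) mod 4 = 3"
proof -
  define r where "r = (3::nat)^k - 1"
  define q where "q = (3::nat)^k - 2"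
  have r4: "r = 4*b+4" unfolding r_def h by simp
  have q4: "q = 4*b+3" unfolding q_def h by simp
  have id: "v * (1 + 2 * (b+1)) = (q * 3^k + r) + (b+1) * N"
    unfolding q4 r4 h v_def N_def by (simp add: algebra_simps)
  have "q * 3^k + r < N" unfolding q4 r4 h N_def by (simp add: algebra_simps)
  moreover have "(v * (1 + 2 * (b+1))) mod N = (q * 3^k + r) mod N" unfolding id by (rule mod_mult_self1)
  ultimately have x: "(v * (1 + 2 * (b+1))) mod N = q * 3^k + r" by simp
  have rl: "r < 3^k" unfolding h r4 by simp
  have ql: "q < 3^k" unfolding h q4 by simp
  have w: "wt3 (k + Suc k) (q * 3^k + r) = wt3 k r + wt3 (Suc k) q"
    by (rule wt3_split[OF rl])
  have "wt3 (k + 1) (0 * 3^k + q) = wt3 k q + wt3 1 0" using wt3_split[OF ql] by blast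
  then have wq: "wt3 (Suc k) q = wt3 k q" by (simp add: wt3_Suc)
  have k1: "k \<ge> 1" proof (rule ccontr) assume "\<not> k \<ge> 1" then have "k = 0" by simp
    then show False using h by simp qed
  have "wt3 k r = 2 * k" unfolding r_def by (rule wt3_all2)
  moreover have "wt3 k q = 2 * k - 1" unfolding q_def using k1 by (rule wt3_m2)
  moreover obtain j where j: "k = 2*j" using ke by blast
  moreover have "j \<ge> 1" using k1 j by simp
  then obtain j' where "j = Suc j'" by (cases j) auto
  ultimately have "wt3 k r + wt3 (Suc k) q = 4*(2*j'+1) + 3" unfolding wq by simp
  then show ?thesis unfolding x w by simp presburger
qed

theorem lemma41:
  fixes m :: nat
  assumes "m \<ge> 5" and "m mod 4 = 1"
  defines "N \<equiv> 3 ^ m - 1"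
      and "v \<equiv> (3 ^ m - 1) div 2 - 3 ^ ((m - 1) div 2) - 1"
  shows "gcd v N = 1 \<and>
    (\<forall>i::nat. i \<le> (3 ^ ((m - 1) div 2) - 1) div 4 \<longrightarrow>
        wt3 m ((v * (1 + 2 * i)) mod N) mod 4 = 3)"
proof -
  obtain t where mt: "m = 4*t+1" using assms(2) by (metis div_mult_mod_eq mult.commute)
  have t1: "t \<ge> 1" using assms(1) mt by simp
  define k where "k = 2*t"
  have kdef: "(m - 1) div 2 = k" unfolding k_def mt by simp
  have mk: "m = k + Suc k" unfolding k_def mt by simp
  have ke: "even k" unfolding k_def by simp
  have h9: "(3::nat)^k = 9^t" unfolding k_def by (simp add: power_mult)
  have "(9::nat)^t mod 4 = (9 mod 4)^t mod 4" by (rule power_mod[symmetric])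
  then have "(9::nat)^t mod 4 = 1" by simp
  then have hm: "(3::nat)^k mod 4 = 1" using h9 by simp
  have "(9::nat)^t \<ge> 9^1" using t1 by (rule power_increasing) simp
  then have hge: "(3::nat)^k \<ge> 9" using h9 by simp
  define b where "b = ((3::nat)^k - 5) div 4"
  have h: "(3::nat)^k = 4*b+5" unfolding b_def using hm hge by presburger
  have p3: "(3::nat)^m = 3 * 3^k * 3^k" unfolding mk by (simp add: power_add)
  have Ne: "N = 48*b*b + 120*b + 74" unfolding N_def p3 h by (simp add: algebra_simps)
  have "(3::nat)^m - 1 = 48*b*b + 120*b + 74" using Ne N_def by simp
  then have "((3::nat)^m - 1) div 2 = 24*b*b + 60*b + 37" by simp
  then have ve: "v = 24*b*b + 56*b + 31" unfolding v_def kdef h by simp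
  have bd: "((3::nat) ^ ((m - 1) div 2) - 1) div 4 = b + 1" unfolding kdef h by simp
  show ?thesis
  proof
    show "gcd v N = 1" unfolding ve Ne by (rule gcd_part)
  next
    show "\<forall>i::nat. i \<le> (3 ^ ((m - 1) div 2) - 1) div 4 \<longrightarrow>
        wt3 m ((v * (1 + 2 * i)) mod N) mod 4 = 3"
    proof (intro allI impI)
      fix i :: nat
      assume "i \<le> (3 ^ ((m - 1) div 2) - 1) div 4"
      then have ib: "i \<le> b + 1" unfolding bd .
      show "wt3 m ((v * (1 + 2 * i)) mod N) mod 4 = 3"
      proof (cases "i \<le> b")
        case True
        then have "b = i + (b - i)" by simp
        from main_gen[OF h this] show ?thesis unfolding mk ve Ne .
      next
        case False
        then have "i = b + 1" using ib by simp
        with main_edge[OF h ke] show ?thesis unfolding mk ve Ne by simp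
      qed
    qed
  qed
qed
end
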